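(* Let $\mathbb{K}$ have characteristic $p>2$ and let $m\ge2$ be even. Let $K^{2,m}$ be the Lie superalgebra with basis $x_0,x_1\,|\,y_1,\dots,y_m$ (even $|$ odd) and nonzero brackets $[x_0,y_i]=-[y_i,x_0]=y_{i+1}$ for $1\le i\le m-1$ and $[y_i,y_{m-i}]=[y_{m-i},y_i]=(-1)^{(m-2i)/2}x_1$ for $1\le i\le m/2$. Then $K^{2,m}$ admits a $p|2p$-structure if and only if $m\le p$, and in that case the $p|2p$-structures are exactly those given by $x_0^{[p]}=s_1x_1$, $x_1^{[p]}=s_2x_1$ with $s_1,s_2\in\mathbb{K}$.
   Context: A $p|2p$-structure on a Lie superalgebra $L$ over a field of characteristic $p>2$ is a map $x\mapsto x^{[p]}$, $L_{\bar0}\to L_{\bar0}$, with $(\lambda x)^{[p]}=\lambda^px^{[p]}$, $(x+y)^{[p]}=x^{[p]}+y^{[p]}+\sum_{i=1}^{p-1}s_i(x,y)$ (where $i s_i(x,y)$ is the coefficient of $\lambda^{i-1}$ in $(\mathrm{ad}_{\lambda x+y})^{p-1}(x)$), and $\mathrm{ad}_{x^{[p]}}(y)=(\mathrm{ad}_x)^p(y)$ for all $x\in L_{\bar0}$, $y\in L$. *)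

theory Defs
  imports Main "HOL-Computational_Algebra.Polynomial"
begin

text \<open>Basis indices of K^{2,m}: X 0 = x_0, X 1 = x_1 (even), Y i = y_i, 1 <= i <= m (odd).
  Elements of the algebra are coefficient functions idx => 'a vanishing off the basis.\<close>

datatype idx = X nat | Y nat

definition basis :: "nat \<Rightarrow> idx set" where
  "basis m = {X 0, X 1} \<union> Y ` {1..m}"

definition Lsp :: "nat \<Rightarrow> (idx \<Rightarrow> 'a::zero) set" where
  "Lsp m = {v. \<forall>j. j \<notin> basis m \<longrightarrow> v j = 0}"

definition Lev :: "(idx \<Rightarrow> 'a::zero) set" where
  "Lev = {v. \<forall>j. j \<notin> {X 0, X 1} \<longrightarrow> v j = 0}"

definition e :: "idx \<Rightarrow> idx \<Rightarrow> 'a::{zero,one}" where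
  "e j = (\<lambda>k. if k = j then 1 else 0)"

definition vsc :: "'a::times \<Rightarrow> (idx \<Rightarrow> 'a) \<Rightarrow> idx \<Rightarrow> 'a" where
  "vsc c v = (\<lambda>j. c * v j)"

definition vadd :: "(idx \<Rightarrow> 'a::plus) \<Rightarrow> (idx \<Rightarrow> 'a) \<Rightarrow> idx \<Rightarrow> 'a" where
  "vadd u v = (\<lambda>j. u j + v j)"

text \<open>Structure constants: coefficient of basis vector c in [a,b].
  [x_0,y_i] = -[y_i,x_0] = y_{i+1} (1<=i<=m-1);
  [y_i,y_{m-i}] = [y_{m-i},y_i] = (-1)^((m-2i)/2) x_1 for 1<=i<=m/2.\<close>
fun sc :: "nat \<Rightarrow> idx \<Rightarrow> idx \<Rightarrow> idx \<Rightarrow> 'a::comm_ring_1" where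
  "sc m (X a) (Y i) c = (if a = 0 \<and> 1 \<le> i \<and> i < m \<and> c = Y (Suc i) then 1 else 0)"
| "sc m (Y i) (X a) c = (if a = 0 \<and> 1 \<le> i \<and> i < m \<and> c = Y (Suc i) then -1 else 0)"
| "sc m (Y i) (Y j) c = (if 1 \<le> i \<and> 1 \<le> j \<and> i + j = m \<and> c = X 1
                          then (-1) ^ ((m - 2 * min i j) div 2) else 0)"
| "sc m (X a) (X b) c = 0"

text \<open>Bilinear bracket of K^{2,m}, over an arbitrary commutative ring of scalars
  (used with 'a and with 'a poly, the latter for the parameter lambda).\<close>
definition br :: "nat \<Rightarrow> (idx \<Rightarrow> 'a::comm_ring_1) \<Rightarrow> (idx \<Rightarrow> 'a) \<Rightarrow> idx \<Rightarrow> 'a" where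
  "br m u v = (\<lambda>c. \<Sum>a\<in>basis m. \<Sum>b\<in>basis m. u a * v b * sc m a b c)"

text \<open>s_i(x,y): i * s_i(x,y) is the coefficient of lambda^(i-1) in (ad_{lambda x + y})^(p-1)(x).
  Computed with coefficients in the polynomial ring 'a[lambda].\<close>
definition s_fun :: "nat \<Rightarrow> nat \<Rightarrow> nat \<Rightarrow> (idx \<Rightarrow> 'a::field) \<Rightarrow> (idx \<Rightarrow> 'a) \<Rightarrow> idx \<Rightarrow> 'a" where
  "s_fun m p i x y =
     (let z = (\<lambda>j. [:y j, x j:]);
          W = (br m z ^^ (p - 1)) (\<lambda>j. [:x j:])
      in (\<lambda>j. inverse (of_nat i) * coeff (W j) (i - 1)))"

text \<open>A p|2p-structure on K^{2,m}: a map L_0 -> L_0 (values off L_0 are irrelevant).\<close>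
definition is_pstruct :: "nat \<Rightarrow> nat \<Rightarrow> ((idx \<Rightarrow> 'a::field) \<Rightarrow> (idx \<Rightarrow> 'a)) \<Rightarrow> bool" where
  "is_pstruct m p \<phi> \<longleftrightarrow>
     (\<forall>x\<in>Lev. \<phi> x \<in> Lev) \<and>
     (\<forall>c. \<forall>x\<in>Lev. \<phi> (vsc c x) = vsc (c ^ p) (\<phi> x)) \<and>
     (\<forall>x\<in>Lev. \<forall>y\<in>Lev. \<phi> (vadd x y) =
         vadd (vadd (\<phi> x) (\<phi> y)) (\<lambda>j. \<Sum>i=1..p-1. s_fun m p i x y j)) \<and>
     (\<forall>x\<in>Lev. \<forall>y\<in>Lsp m. br m (\<phi> x) y = (br m x ^^ p) y)"

end

theory Submission
  imports Defs "HOL-Computational_Algebra.Primes"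
begin

definition shiftf :: "nat \<Rightarrow> 'a::comm_ring_1 \<Rightarrow> (idx \<Rightarrow> 'a) \<Rightarrow> idx \<Rightarrow> 'a" where
  "shiftf m c y = (\<lambda>k. case k of X _ \<Rightarrow> 0 | Y j \<Rightarrow> if 2 \<le> j \<and> j \<le> m then c * y (Y (j-1)) else 0)"

lemma finite_basis[simp]: "finite (basis m)"
  by (simp add: basis_def)

lemma br_Lev:
  fixes x y :: "idx \<Rightarrow> 'a::comm_ring_1"
  assumes "x \<in> Lev"
  shows "br m x y = shiftf m (x (X 0)) y"
proof
  fix c
  let ?F = "\<lambda>a. \<Sum>b\<in>basis m. x a * y b * sc m a b c"
  have F: "?F a = (if a = X 0 then ?F (X 0) else 0)" for a
  proof (cases "a \<in> {X 0, X 1}")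
    case True
    then show ?thesis
    proof
      assume "a = X 0" then show ?thesis by simp
    next
      assume a: "a \<in> {X 1}"
      have "x a * y b * sc m a b c = 0" for b using a by (cases b) auto
      then show ?thesis using a by simp
    qed
  next
    case False
    then have "x a = 0" using assms by (auto simp: Lev_def)
    then show ?thesis using False by auto
  qed
  have X0: "X 0 \<in> basis m" by (simp add: basis_def)
  have "br m x y c = ?F (X 0)"
    unfolding br_def by (subst F) (simp add: X0)
  also have "\<dots> = shiftf m (x (X 0)) y c"
  proof (cases c)
    case (X n)
    have "x (X 0) * y b * sc m (X 0) b c = 0" for b using X by (cases b) auto
    then show ?thesis using X by (simp add: shiftf_def)
  next
    case (Y j)
    have G: "x (X 0) * y b * sc m (X 0) b c =
       (if 2 \<le> j \<and> j \<le> m \<and> b = Y (j-1) then x (X 0) * y (Y (j-1)) else 0)" for b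
      using Y by (cases b) auto
    show ?thesis
    proof (cases "2 \<le> j \<and> j \<le> m")
      case True
      then have "Y (j-1) \<in> basis m" unfolding basis_def by (intro UnI2 imageI) auto
      then show ?thesis unfolding G using True Y by (simp add: shiftf_def)
    next
      case False
      then have Z: "x (X 0) * y b * sc m (X 0) b c = 0" for b unfolding G by auto
      show ?thesis unfolding Z using Y False by (auto simp add: shiftf_def)
    qed
  qed
  finally show "br m x y c = shiftf m (x (X 0)) y c" .
qed

lemma br_iter:
  fixes x y :: "idx \<Rightarrow> 'a::comm_ring_1"
  assumes "x \<in> Lev"
  shows "(br m x ^^ Suc k) y = (\<lambda>c. case c of X _ \<Rightarrow> 0 | Y j \<Rightarrow>
            if Suc k < j \<and> j \<le> m then x (X 0) ^ Suc k * y (Y (j - Suc k)) else 0)"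
proof (induction k)
  case 0
  show ?case
    by (auto simp: br_Lev[OF assms] shiftf_def fun_eq_iff split: idx.split)
next
  case (Suc k)
  have "(br m x ^^ Suc (Suc k)) y = br m x ((br m x ^^ Suc k) y)" by simp
  then show ?case unfolding Suc br_Lev[OF assms]
    by (auto simp: shiftf_def fun_eq_iff split: idx.split)
qed

lemma br_iter_zero:
  fixes x y :: "idx \<Rightarrow> 'a::comm_ring_1"
  assumes "x \<in> Lev" "m \<le> Suc k"
  shows "(br m x ^^ Suc k) y = (\<lambda>_. 0)"
  unfolding br_iter[OF assms(1)] using assms(2) by (auto simp: fun_eq_iff split: idx.split)

lemma s_fun_zero:
  fixes x y :: "idx \<Rightarrow> 'a::field"
  assumes "x \<in> Lev" "y \<in> Lev" "p \<ge> 2"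
  shows "s_fun m p i x y = (\<lambda>_. 0)"
proof -
  define z where "z = (\<lambda>j. [:y j, x j:])"
  have zL: "z \<in> Lev" using assms by (auto simp: Lev_def z_def)
  obtain k where k: "p - 1 = Suc k" using assms(3) by (cases "p - 1") auto
  have "(br m z ^^ (p - 1)) (\<lambda>j. [:x j:]) = (\<lambda>_. 0)"
    unfolding k br_iter[OF zL] using assms(1)
    by (auto simp: fun_eq_iff Lev_def split: idx.split)
  then show ?thesis unfolding s_fun_def Let_def z_def[symmetric] by simp
qed

lemma Lev_form:
  fixes v :: "idx \<Rightarrow> 'a::comm_ring_1"
  assumes "v \<in> Lev" "v (X 0) = 0"
  shows "v = vsc (v (X 1)) (e (X 1))"
proof
  fix j show "v j = vsc (v (X 1)) (e (X 1)) j"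
    using assms by (cases "j \<in> {X 0, X 1}") (auto simp: Lev_def vsc_def e_def)
qed

lemma e_Lev[simp]: "e (X 0) \<in> Lev" "e (X 1) \<in> Lev"
  by (auto simp: Lev_def e_def)

lemma eY_Lsp: "1 \<le> i \<Longrightarrow> i \<le> m \<Longrightarrow> e (Y i) \<in> Lsp m"
  by (auto simp: Lsp_def e_def basis_def)

lemma vsc_Lev[simp]: "(x :: idx \<Rightarrow> 'a::comm_ring_1) \<in> Lev \<Longrightarrow> vsc c x \<in> Lev"
  by (auto simp: Lev_def vsc_def)

lemma decomp:
  fixes x :: "idx \<Rightarrow> 'a::comm_ring_1"
  assumes "x \<in> Lev"
  shows "x = vadd (vsc (x (X 0)) (e (X 0))) (vsc (x (X 1)) (e (X 1)))"
proof
  fix j show "x j = vadd (vsc (x (X 0)) (e (X 0))) (vsc (x (X 1)) (e (X 1))) j"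
    using assms by (cases "j \<in> {X 0, X 1}") (auto simp: Lev_def vsc_def vadd_def e_def)
qed

lemma pstruct_eval:
  fixes \<phi> :: "(idx \<Rightarrow> 'a::field) \<Rightarrow> (idx \<Rightarrow> 'a)"
  assumes "is_pstruct m p \<phi>" "p \<ge> 2" "x \<in> Lev"
  shows "\<phi> x = vadd (vsc (x (X 0) ^ p) (\<phi> (e (X 0)))) (vsc (x (X 1) ^ p) (\<phi> (e (X 1))))"
proof -
  have A: "\<phi> (vadd u v) = vadd (\<phi> u) (\<phi> v)" if "u \<in> Lev" "v \<in> Lev" for u v
  proof -
    have "\<phi> (vadd u v) = vadd (vadd (\<phi> u) (\<phi> v)) (\<lambda>j. \<Sum>i=1..p-1. s_fun m p i u v j)"
      using assms(1) that unfolding is_pstruct_def by blast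
    also have "(\<lambda>j. \<Sum>i=1..p-1. s_fun m p i u v j) = (\<lambda>_. 0)"
      using s_fun_zero[OF that assms(2)] by simp
    finally show ?thesis by (simp add: vadd_def)
  qed
  have S: "\<phi> (vsc c u) = vsc (c ^ p) (\<phi> u)" if "u \<in> Lev" for c u
    using assms(1) that unfolding is_pstruct_def by blast
  have "\<phi> x = \<phi> (vadd (vsc (x (X 0)) (e (X 0))) (vsc (x (X 1)) (e (X 1))))"
    using decomp[OF assms(3)] by simp
  also have "\<dots> = vadd (\<phi> (vsc (x (X 0)) (e (X 0)))) (\<phi> (vsc (x (X 1)) (e (X 1))))"
    by (rule A; rule vsc_Lev; rule e_Lev)
  also have "\<dots> = vadd (vsc (x (X 0) ^ p) (\<phi> (e (X 0)))) (vsc (x (X 1) ^ p) (\<phi> (e (X 1))))"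
    by (simp only: S e_Lev)
  finally show ?thesis .
qed

theorem mainTheorem13:
  fixes p m :: nat
  assumes "CHAR('a::field) = p" and "p > 2" and "m \<ge> 2" and "even m"
  shows "((\<exists>\<phi> :: (idx \<Rightarrow> 'a) \<Rightarrow> (idx \<Rightarrow> 'a). is_pstruct m p \<phi>) \<longleftrightarrow> m \<le> p) \<and>
    (m \<le> p \<longrightarrow>
      (\<forall>\<phi> :: (idx \<Rightarrow> 'a) \<Rightarrow> (idx \<Rightarrow> 'a). is_pstruct m p \<phi> \<longrightarrow>
          (\<exists>s1 s2. \<phi> (e (X 0)) = vsc s1 (e (X 1)) \<and> \<phi> (e (X 1)) = vsc s2 (e (X 1)))) \<and>
      (\<forall>s1 s2 :: 'a. \<exists>\<phi>. is_pstruct m p \<phi> \<and>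
          \<phi> (e (X 0)) = vsc s1 (e (X 1)) \<and> \<phi> (e (X 1)) = vsc s2 (e (X 1))) \<and>
      (\<forall>\<phi> \<psi> :: (idx \<Rightarrow> 'a) \<Rightarrow> (idx \<Rightarrow> 'a). is_pstruct m p \<phi> \<longrightarrow> is_pstruct m p \<psi> \<longrightarrow>
          \<phi> (e (X 0)) = \<psi> (e (X 0)) \<longrightarrow> \<phi> (e (X 1)) = \<psi> (e (X 1)) \<longrightarrow>
          (\<forall>x\<in>Lev. \<phi> x = \<psi> x)))"
proof -
  have p2: "p \<ge> 2" using assms(2) by simp
  obtain k where pk: "p = Suc k" using assms(2) by (cases p) auto
  have primeC: "prime CHAR('a)"
    using assms(1,2) by (intro prime_CHAR_semidom) simp
  have frob: "(a + b) ^ p = a ^ p + b ^ p" for a b :: 'a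
    using freshmans_dream[OF primeC assms(1)[symmetric]] .
  have eY1: "e (Y 1) \<in> Lsp m" using assms(3) by (intro eY_Lsp) auto
  have adc: "br m (\<phi> x) y = (br m x ^^ p) y" if "is_pstruct m p \<phi>" "x \<in> Lev" "y \<in> Lsp m"
    for \<phi> :: "(idx \<Rightarrow> 'a) \<Rightarrow> (idx \<Rightarrow> 'a)" and x y
    using that unfolding is_pstruct_def by blast
  have inLev: "\<phi> x \<in> Lev" if "is_pstruct m p \<phi>" "x \<in> Lev"
    for \<phi> :: "(idx \<Rightarrow> 'a) \<Rightarrow> (idx \<Rightarrow> 'a)" and x
    using that unfolding is_pstruct_def by blast
  have nec: "m \<le> p" if "is_pstruct m p \<phi>" for \<phi> :: "(idx \<Rightarrow> 'a) \<Rightarrow> (idx \<Rightarrow> 'a)"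
  proof (rule ccontr)
    assume "\<not> m \<le> p"
    then have mp: "Suc p \<le> m" by simp
    have "br m (\<phi> (e (X 0))) (e (Y 1)) (Y (Suc p)) = (br m (e (X 0)) ^^ p) (e (Y 1)) (Y (Suc p))"
      using adc[OF that e_Lev(1) eY1] by simp
    moreover have "br m (\<phi> (e (X 0))) (e (Y 1)) (Y (Suc p)) = 0"
      unfolding br_Lev[OF inLev[OF that e_Lev(1)]] using assms(2) by (simp add: shiftf_def e_def)
    moreover have "(br m (e (X 0)) ^^ p) (e (Y 1)) (Y (Suc p)) = 1"
      unfolding pk br_iter[OF e_Lev(1)] using mp pk by (simp add: e_def)
    ultimately show False by (metis zero_neq_one)
  qed
  have part2: "\<exists>s1 s2. \<phi> (e (X 0)) = vsc s1 (e (X 1)) \<and> \<phi> (e (X 1)) = vsc s2 (e (X 1))"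
    if "is_pstruct m p \<phi>" "m \<le> p" for \<phi> :: "(idx \<Rightarrow> 'a) \<Rightarrow> (idx \<Rightarrow> 'a)"
  proof -
    have z: "\<phi> x (X 0) = 0" if "x \<in> Lev" for x
    proof -
      have "br m (\<phi> x) (e (Y 1)) (Y 2) = (br m x ^^ p) (e (Y 1)) (Y 2)"
        using adc[OF \<open>is_pstruct m p \<phi>\<close> that eY1] by simp
      also have "\<dots> = 0" unfolding pk br_iter_zero[OF that \<open>m \<le> p\<close>[unfolded pk]] by simp
      finally show ?thesis
        unfolding br_Lev[OF inLev[OF \<open>is_pstruct m p \<phi>\<close> that]] using assms(3)
        by (simp add: shiftf_def e_def)
    qed
    show ?thesis
      using Lev_form[OF inLev[OF that(1) e_Lev(1)] z[OF e_Lev(1)]]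
        Lev_form[OF inLev[OF that(1) e_Lev(2)] z[OF e_Lev(2)]] by blast
  qed
  have part3: "\<exists>\<phi>. is_pstruct m p \<phi> \<and>
          \<phi> (e (X 0)) = vsc s1 (e (X 1)) \<and> \<phi> (e (X 1)) = vsc s2 (e (X 1))"
    if "m \<le> p" for s1 s2 :: 'a
  proof -
    define \<phi> :: "(idx \<Rightarrow> 'a) \<Rightarrow> (idx \<Rightarrow> 'a)" where
      "\<phi> = (\<lambda>v. vsc (v (X 0) ^ p * s1 + v (X 1) ^ p * s2) (e (X 1)))"
    have phiL: "\<phi> x \<in> Lev" for x unfolding \<phi>_def by (rule vsc_Lev, rule e_Lev)
    have phi0: "\<phi> x (X 0) = 0" for x by (simp add: \<phi>_def vsc_def e_def)
    have "is_pstruct m p \<phi>"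
      unfolding is_pstruct_def
    proof (intro conjI ballI allI)
      fix x :: "idx \<Rightarrow> 'a" show "\<phi> x \<in> Lev" by (rule phiL)
    next
      fix c :: 'a and x :: "idx \<Rightarrow> 'a"
      show "\<phi> (vsc c x) = vsc (c ^ p) (\<phi> x)"
        by (simp add: \<phi>_def vsc_def fun_eq_iff power_mult_distrib algebra_simps)
    next
      fix x y :: "idx \<Rightarrow> 'a" assume xy: "x \<in> Lev" "y \<in> Lev"
      have "(\<lambda>j. \<Sum>i=1..p-1. s_fun m p i x y j) = (\<lambda>_. 0)"
        using s_fun_zero[OF xy p2] by simp
      then show "\<phi> (vadd x y) = vadd (vadd (\<phi> x) (\<phi> y)) (\<lambda>j. \<Sum>i=1..p-1. s_fun m p i x y j)"
        by (simp add: \<phi>_def vsc_def vadd_def fun_eq_iff frob algebra_simps)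
    next
      fix x y :: "idx \<Rightarrow> 'a" assume x: "x \<in> Lev" and "y \<in> Lsp m"
      have "br m (\<phi> x) y = (\<lambda>_. 0)"
        unfolding br_Lev[OF phiL] phi0 by (simp add: shiftf_def fun_eq_iff split: idx.split)
      also have "\<dots> = (br m x ^^ p) y"
        unfolding pk br_iter_zero[OF x \<open>m \<le> p\<close>[unfolded pk]] ..
      finally show "br m (\<phi> x) y = (br m x ^^ p) y" .
    qed
    moreover have "\<phi> (e (X 0)) = vsc s1 (e (X 1))" "\<phi> (e (X 1)) = vsc s2 (e (X 1))"
      using assms(2) by (simp_all add: \<phi>_def e_def pk)
    ultimately show ?thesis by blast
  qed
  have part4: "\<phi> x = \<psi> x" if "is_pstruct m p \<phi>" "is_pstruct m p \<psi>"
      "\<phi> (e (X 0)) = \<psi> (e (X 0))" "\<phi> (e (X 1)) = \<psi> (e (X 1))" "x \<in> Lev"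
    for \<phi> \<psi> :: "(idx \<Rightarrow> 'a) \<Rightarrow> (idx \<Rightarrow> 'a)" and x
    using pstruct_eval[OF that(1) p2 that(5)] pstruct_eval[OF that(2) p2 that(5)] that(3,4) by simp
  show ?thesis
    using nec part2 part3 part4 by blast
qed

end
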